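(* Assume the setting and hypotheses below, including $L>1$, and suppose $D_M(t)=kD(t)$ with $k>0$ and $D$ a positive continuous $T$-periodic function. Let $c^*(k)=\inf_{\mu>0}\frac1\mu\ln\int_{\mathbb{R}}e^{\mu y}\mathcal{K}(y)dy$ be the spreading speed with this $D_M$. Then $$\lim_{k\to+\infty}\frac{c^*(k)}{\sqrt k}=\inf_{\mu>0}H(\mu,+\infty)\in(0,+\infty),$$ where $$H(\mu,+\infty)=\frac1\mu\ln\Big(e^{\mu^2\int_0^TD(s)ds-\int_0^Td_M(s)ds}+\int_{t_\alpha}^{t_\beta}\partial_\varphi R(s,0)\,e^{-\left(\int_0^{s-\tau(s)}+\int_s^T\right)d_M(\omega)d\omega}\,e^{\mu^2\left(\int_0^{s-\tau(s)}+\int_s^T\right)D(\omega)d\omega}ds\Big).$$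
   Context: Setting. $T>0$; $D_I\ge0$, $d_M,d_I>0$, $\tau>0$, $p\ge0$ are $C^1$ $T$-periodic functions; $h\in C^1([0,\infty);[0,\infty))$; $0<\alpha\le\beta<t_\alpha\le t_\beta<T$ with $t_\alpha-\tau(t_\alpha)=\alpha$, $t_\beta-\tau(t_\beta)=\beta$, $p=0$ on $[0,\alpha]\cup[\beta,T]$; $\tau'<1$; $h(0)=0$, $h(z)\to0$ as $z\to\infty$, $h$ unimodal (increasing then decreasing); $h(\lambda z)\ge\lambda h(z)$ for $\lambda\in(0,1)$. Notation: $\partial_\varphi R(s,0)=(1-\tau'(s))e^{-\int_{s-\tau(s)}^sd_I}p(s-\tau(s))h'(0)$, $\sigma(s)=\int_{s-\tau(s)}^sD_I$, $\overline{k}_M(t,s)=e^{-\int_s^td_M}$, $L=\frac{\overline{k}_M(T,0)}{1-\overline{k}_M(T,0)}\int_{t_\alpha}^{t_\beta}\frac{\partial_\varphi R(s,0)}{\overline{k}_M(s,s-\tau(s))}ds$. The quantity $\int e^{\mu y}\mathcal{K}(y)dy$ equals $e^{\int_0^T[\mu^2D_M-d_M]}+\int_{t_\alpha}^{t_\beta}\partial_\varphi R(s,0)e^{(\int_s^T+\int_0^{s-\tau(s)})[\mu^2D_M(\varsigma)-d_M(\varsigma)]d\varsigma+\mu^2\sigma(s)}ds$. *)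

theory Defs
  imports "HOL-Analysis.Analysis"
begin

definition periodic_fun :: "real \<Rightarrow> (real \<Rightarrow> real) \<Rightarrow> bool" where
  "periodic_fun T f \<longleftrightarrow> (\<forall>t. f (t + T) = f t)"

definition C1_fun :: "(real \<Rightarrow> real) \<Rightarrow> bool" where
  "C1_fun f \<longleftrightarrow> (\<forall>x. f differentiable (at x)) \<and> continuous_on UNIV (deriv f)"

text \<open>\<partial>_\<phi> R(s,0); the argument h'0 stands for h'(0).\<close>
definition dR0 :: "(real \<Rightarrow> real) \<Rightarrow> (real \<Rightarrow> real) \<Rightarrow> (real \<Rightarrow> real) \<Rightarrow> real \<Rightarrow> real \<Rightarrow> real" where
  "dR0 \<tau> dI p h'0 s =
     (1 - deriv \<tau> s) * exp (- integral {s - \<tau> s..s} dI) * p (s - \<tau> s) * h'0"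

definition kbarM :: "(real \<Rightarrow> real) \<Rightarrow> real \<Rightarrow> real \<Rightarrow> real" where
  "kbarM dM t s = exp (- integral {s..t} dM)"

definition sigmaI :: "(real \<Rightarrow> real) \<Rightarrow> (real \<Rightarrow> real) \<Rightarrow> real \<Rightarrow> real" where
  "sigmaI \<tau> DI s = integral {s - \<tau> s..s} DI"

definition Lnum :: "real \<Rightarrow> real \<Rightarrow> real \<Rightarrow> (real \<Rightarrow> real) \<Rightarrow> (real \<Rightarrow> real) \<Rightarrow>
    (real \<Rightarrow> real) \<Rightarrow> (real \<Rightarrow> real) \<Rightarrow> real \<Rightarrow> real" where
  "Lnum T t\<alpha> t\<beta> dM dI \<tau> p h'0 =
     kbarM dM T 0 / (1 - kbarM dM T 0) *
     integral {t\<alpha>..t\<beta>} (\<lambda>s. dR0 \<tau> dI p h'0 s / kbarM dM s (s - \<tau> s))"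

text \<open>The quantity \<integral> e^{\<mu> y} K(y) dy, for a given diffusion D_M.\<close>
definition kernel_mgf :: "real \<Rightarrow> real \<Rightarrow> real \<Rightarrow> (real \<Rightarrow> real) \<Rightarrow> (real \<Rightarrow> real) \<Rightarrow>
    (real \<Rightarrow> real) \<Rightarrow> (real \<Rightarrow> real) \<Rightarrow> (real \<Rightarrow> real) \<Rightarrow> (real \<Rightarrow> real) \<Rightarrow> real \<Rightarrow> real \<Rightarrow> real" where
  "kernel_mgf T t\<alpha> t\<beta> DM dM DI dI \<tau> p h'0 \<mu> =
     exp (integral {0..T} (\<lambda>\<zeta>. \<mu>\<^sup>2 * DM \<zeta> - dM \<zeta>)) +
     integral {t\<alpha>..t\<beta>} (\<lambda>s. dR0 \<tau> dI p h'0 s *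
        exp (integral {s..T} (\<lambda>\<zeta>. \<mu>\<^sup>2 * DM \<zeta> - dM \<zeta>)
             + integral {0..s - \<tau> s} (\<lambda>\<zeta>. \<mu>\<^sup>2 * DM \<zeta> - dM \<zeta>)
             + \<mu>\<^sup>2 * sigmaI \<tau> DI s))"

definition spreading_speed :: "real \<Rightarrow> real \<Rightarrow> real \<Rightarrow> (real \<Rightarrow> real) \<Rightarrow> (real \<Rightarrow> real) \<Rightarrow>
    (real \<Rightarrow> real) \<Rightarrow> (real \<Rightarrow> real) \<Rightarrow> (real \<Rightarrow> real) \<Rightarrow> (real \<Rightarrow> real) \<Rightarrow> real \<Rightarrow> real" where
  "spreading_speed T t\<alpha> t\<beta> DM dM DI dI \<tau> p h'0 =
     (INF \<mu>\<in>{0<..}. (1 / \<mu>) * ln (kernel_mgf T t\<alpha> t\<beta> DM dM DI dI \<tau> p h'0 \<mu>))"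

definition H_infty :: "real \<Rightarrow> real \<Rightarrow> real \<Rightarrow> (real \<Rightarrow> real) \<Rightarrow> (real \<Rightarrow> real) \<Rightarrow>
    (real \<Rightarrow> real) \<Rightarrow> (real \<Rightarrow> real) \<Rightarrow> (real \<Rightarrow> real) \<Rightarrow> real \<Rightarrow> real \<Rightarrow> real" where
  "H_infty T t\<alpha> t\<beta> D dM dI \<tau> p h'0 \<mu> =
     (1 / \<mu>) * ln (
       exp (\<mu>\<^sup>2 * integral {0..T} D - integral {0..T} dM) +
       integral {t\<alpha>..t\<beta>} (\<lambda>s. dR0 \<tau> dI p h'0 s *
          exp (- (integral {0..s - \<tau> s} dM + integral {s..T} dM)) *
          exp (\<mu>\<^sup>2 * (integral {0..s - \<tau> s} D + integral {s..T} D))))"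

end

theory Submission
  imports Defs
begin

lemma C1_cont: "C1_fun f \<Longrightarrow> continuous_on UNIV f"
  unfolding C1_fun_def
  by (meson continuous_at_imp_continuous_on differentiable_imp_continuous_within)

lemma int_ok: "continuous_on UNIV f \<Longrightarrow> (f::real\<Rightarrow>real) integrable_on {a..b}"
  by (meson continuous_on_subset integrable_continuous_interval subset_UNIV)

lemma int_lin: "continuous_on UNIV f \<Longrightarrow> continuous_on UNIV g \<Longrightarrow>
  integral {a..b} (\<lambda>z. c * f z - g z) = c * integral {a..b} f - integral {a..b} (g::real\<Rightarrow>real)"
proof -
  assume f: "continuous_on UNIV f" and g: "continuous_on UNIV g"
  have "integral {a..b} (\<lambda>z. c * f z - g z) = integral {a..b} (\<lambda>z. c * f z) - integral {a..b} g"
    by (rule integral_diff) (intro int_ok continuous_intros f g)+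
  then show ?thesis by simp
qed

lemma int_split: "continuous_on UNIV f \<Longrightarrow> a \<le> c \<Longrightarrow> c \<le> b \<Longrightarrow>
  integral {a..c} f + integral {c..b} f = integral {a..b} (f::real\<Rightarrow>real)"
  by (rule Henstock_Kurzweil_Integration.integral_combine) (auto intro: int_ok)

lemma cont_F: "continuous_on UNIV f \<Longrightarrow> continuous_on {a..b} (\<lambda>x. integral {a..x} (f::real\<Rightarrow>real))"
  by (simp add: int_ok indefinite_integral_continuous_1)

lemma int_nonneg: "continuous_on UNIV f \<Longrightarrow> \<forall>t. f t \<ge> 0 \<Longrightarrow> integral {a..b} (f::real\<Rightarrow>real) \<ge> 0"
  by (simp add: int_ok integral_nonneg)

lemma int_pos: assumes "continuous_on UNIV f" "\<forall>t. f t > 0" "a < b"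
  shows "integral {a..b} (f::real\<Rightarrow>real) > 0"
proof -
  have "\<exists>x\<in>{a..b}. \<forall>y\<in>{a..b}. f x \<le> f y"
  proof -
    have "continuous_on {a..b} f" using assms(1) by (rule continuous_on_subset) simp
    then show ?thesis using continuous_attains_inf[of "{a..b}" f] assms(3) by auto
  qed
  then obtain x where x: "x \<in> {a..b}" "\<forall>y\<in>{a..b}. f x \<le> f y" by blast
  have "integral {a..b} (\<lambda>_. f x) \<le> integral {a..b} f"
    by (rule integral_le) (use x in \<open>auto intro: int_ok assms(1)\<close>)
  moreover have "integral {a..b} (\<lambda>_. f x) = (b - a) * f x" using assms by simp
  moreover have "(b - a) * f x > 0" using assms by simp
  ultimately show ?thesis by linarith
qed

lemma deriv_nonneg_min:
  assumes "(h has_real_derivative d) (at 0 within {0..})" "\<forall>z\<ge>0. h z \<ge> 0" "h 0 = 0"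
  shows "d \<ge> (0::real)"
proof -
  have lim: "((\<lambda>y. (h y - h 0) / (y - 0)) \<longlongrightarrow> d) (at 0 within {0..})"
    using assms(1) has_field_derivative_iff by blast
  have nt: "at (0::real) within {0..} \<noteq> bot"
  proof -
    have "{0..} - {0::real} = {0<..}" by auto
    then show ?thesis by (simp add: at_within_eq_bot_iff closure_greaterThan)
  qed
  have ev: "eventually (\<lambda>y. (h y - h 0) / (y - 0) \<ge> 0) (at 0 within {0..})"
    unfolding eventually_at_filter using assms(2,3) by auto
  show ?thesis using tendsto_lowerbound[OF lim ev nt] .
qed

theorem proposition4p6:
  fixes T \<alpha> \<beta> t\<alpha> t\<beta> :: real
    and DI dM dI \<tau> p D :: "real \<Rightarrow> real"
    and h h' :: "real \<Rightarrow> real"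
  assumes T_pos: "T > 0"
    and DI: "C1_fun DI" "periodic_fun T DI" "\<forall>t. DI t \<ge> 0"
    and dM: "C1_fun dM" "periodic_fun T dM" "\<forall>t. dM t > 0"
    and dI: "C1_fun dI" "periodic_fun T dI" "\<forall>t. dI t > 0"
    and tau: "C1_fun \<tau>" "periodic_fun T \<tau>" "\<forall>t. \<tau> t > 0" "\<forall>t. deriv \<tau> t < 1"
    and p: "C1_fun p" "periodic_fun T p" "\<forall>t. p t \<ge> 0"
      "\<forall>t\<in>{0..\<alpha>} \<union> {\<beta>..T}. p t = 0"
    and times: "0 < \<alpha>" "\<alpha> \<le> \<beta>" "\<beta> < t\<alpha>" "t\<alpha> \<le> t\<beta>" "t\<beta> < T"
      "t\<alpha> - \<tau> t\<alpha> = \<alpha>" "t\<beta> - \<tau> t\<beta> = \<beta>"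
    and h_nonneg: "\<forall>z\<ge>0. h z \<ge> 0"
    and h_C1: "\<forall>z\<ge>0. (h has_real_derivative h' z) (at z within {0..})"
      "continuous_on {0..} h'"
    and h0: "h 0 = 0"
    and h_lim: "(h \<longlongrightarrow> 0) at_top"
    and h_unimodal: "\<exists>z0\<ge>0. mono_on {0..z0} h \<and> antimono_on {z0..} h"
    and h_sub: "\<forall>l\<in>{0<..<1}. \<forall>z\<ge>0. h (l * z) \<ge> l * h z"
    and L_gt1: "Lnum T t\<alpha> t\<beta> dM dI \<tau> p (h' 0) > 1"
    and D: "continuous_on UNIV D" "periodic_fun T D" "\<forall>t. D t > 0"
  shows "((\<lambda>k. spreading_speed T t\<alpha> t\<beta> (\<lambda>t. k * D t) dM DI dI \<tau> p (h' 0) / sqrt k)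
            \<longlongrightarrow> (INF \<mu>\<in>{0<..}. H_infty T t\<alpha> t\<beta> D dM dI \<tau> p (h' 0) \<mu>)) at_top
         \<and> bdd_below ((\<lambda>\<mu>. H_infty T t\<alpha> t\<beta> D dM dI \<tau> p (h' 0) \<mu>) ` {0<..})
         \<and> (INF \<mu>\<in>{0<..}. H_infty T t\<alpha> t\<beta> D dM dI \<tau> p (h' 0) \<mu>) > 0"
  proof -
  have cD: "continuous_on UNIV D" using D(1) .
  have cdM: "continuous_on UNIV dM" using C1_cont dM(1) .
  have cDI: "continuous_on UNIV DI" using C1_cont DI(1) .
  have cdI: "continuous_on UNIV dI" using C1_cont dI(1) .
  have ctau: "continuous_on UNIV \<tau>" using C1_cont tau(1) .
  have cp: "continuous_on UNIV p" using C1_cont p(1) .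
  have cdtau: "continuous_on UNIV (deriv \<tau>)" using tau(1) unfolding C1_fun_def by blast
  define g where "g = (\<lambda>s. s - \<tau> s)"
  define S where "S = {t\<alpha>..t\<beta>}"
  have cg: "continuous_on UNIV g" unfolding g_def by (intro continuous_intros ctau)
  have gmono: "g x \<le> g y" if "x \<le> y" for x y
  proof (rule DERIV_nonneg_imp_nondecreasing[OF that])
    fix z
    have "DERIV \<tau> z :> deriv \<tau> z"
      using tau(1) unfolding C1_fun_def by (simp add: DERIV_deriv_iff_real_differentiable)
    then have "DERIV g z :> 1 - deriv \<tau> z" unfolding g_def by (auto intro!: derivative_eq_intros)
    then show "\<exists>y. DERIV g z :> y \<and> y \<ge> 0" using tau(4) by (metis diff_ge_0_iff_ge less_imp_le)
  qed
  have gS: "0 \<le> g s \<and> g s \<le> s \<and> s \<le> T \<and> 0 \<le> s" if "s \<in> S" for s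
  proof -
    have "g t\<alpha> \<le> g s" using that gmono unfolding S_def by auto
    moreover have "g t\<alpha> = \<alpha>" using times(6) unfolding g_def by simp
    ultimately show ?thesis using that times tau(3) unfolding S_def g_def by (auto simp: less_imp_le[OF tau(3)[rule_format]])
  qed
  have hpos: "h' 0 \<ge> 0"
    using deriv_nonneg_min[of h "h' 0"] h_C1(1) h_nonneg h0 by auto
  have cI0: "continuous_on S (\<lambda>s. integral {0..g s} f)" if f: "continuous_on UNIV f" for f :: "real \<Rightarrow> real"
  proof (rule continuous_on_compose2[OF cont_F[OF f, of 0 T]])
    show "continuous_on S g" using cg by (rule continuous_on_subset) simp
    show "g ` S \<subseteq> {0..T}" using gS by force
  qed
  have cIs: "continuous_on S (\<lambda>s. integral {0..s} f)" if f: "continuous_on UNIV f" for f :: "real \<Rightarrow> real"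
    using cont_F[OF f, of 0 T] by (rule continuous_on_subset) (use gS in force)
  have cIT: "continuous_on S (\<lambda>s. integral {s..T} f)" if f: "continuous_on UNIV f" for f :: "real \<Rightarrow> real"
    using indefinite_integral_continuous_1'[OF int_ok[OF f], of 0 T] by (rule continuous_on_subset) (use gS in force)
  have cIg: "continuous_on S (\<lambda>s. integral {g s..s} f)" if f: "continuous_on UNIV f" for f :: "real \<Rightarrow> real"
  proof -
    have "continuous_on S (\<lambda>s. integral {0..s} f - integral {0..g s} f)"
      by (intro continuous_intros cIs cI0 f)
    moreover have "integral {0..s} f - integral {0..g s} f = integral {g s..s} f" if "s \<in> S" for s
      using int_split[OF f, of 0 "g s" s] gS[OF that] by simp
    ultimately show ?thesis by (rule continuous_on_eq) auto
  qed
  define r where "r = dR0 \<tau> dI p (h' 0)"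
  have cr: "continuous_on S r"
  proof -
    have "continuous_on S (\<lambda>s. p (g s))"
      using continuous_on_compose2[OF cp, of S g] cg by (auto intro: continuous_on_subset)
    moreover have "continuous_on S (deriv \<tau>)" using cdtau by (rule continuous_on_subset) simp
    ultimately show ?thesis unfolding r_def dR0_def
      using cIg[OF cdI] unfolding g_def by (intro continuous_intros) auto
  qed
  have r0: "r s \<ge> 0" if "s \<in> S" for s
    unfolding r_def dR0_def using tau(4) p(3) hpos by (auto intro!: mult_nonneg_nonneg simp: less_imp_le)
  define a where "a = (\<lambda>s. integral {0..s - \<tau> s} D + integral {s..T} D)"
  define b where "b = (\<lambda>s. integral {0..s - \<tau> s} dM + integral {s..T} dM)"
  define \<sigma> where "\<sigma> = sigmaI \<tau> DI"
  have ca: "continuous_on S a" unfolding a_def using cI0[OF cD] cIT[OF cD] unfolding g_def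
    by (intro continuous_intros) auto
  have cb: "continuous_on S b" unfolding b_def using cI0[OF cdM] cIT[OF cdM] unfolding g_def
    by (intro continuous_intros) auto
  have c\<sigma>: "continuous_on S \<sigma>" unfolding \<sigma>_def sigmaI_def using cIg[OF cDI] unfolding g_def by simp
  have a0: "a s \<ge> 0" for s unfolding a_def using int_nonneg[OF cD] D(3) by (simp add: less_imp_le add_nonneg_nonneg)
  have \<sigma>0: "\<sigma> s \<ge> 0" for s unfolding \<sigma>_def sigmaI_def using int_nonneg[OF cDI] DI(3) by simp
  have Sne: "S \<noteq> {}" unfolding S_def using times by simp
  obtain Sm where Sm: "\<forall>s\<in>S. \<sigma> s \<le> Sm"
    using continuous_attains_sup[OF _ Sne c\<sigma>] unfolding S_def by auto
  define A where "A = integral {0..T} D"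
  define B where "B = integral {0..T} dM"
  have Apos: "A > 0" unfolding A_def using int_pos[OF cD] D(3) T_pos by blast
  define G where "G = (\<lambda>\<nu>. exp (\<nu>\<^sup>2 * A - B) + integral S (\<lambda>s. r s * exp (- b s) * exp (\<nu>\<^sup>2 * a s)))"
  have Hdef: "H_infty T t\<alpha> t\<beta> D dM dI \<tau> p (h' 0) \<nu> = (1 / \<nu>) * ln (G \<nu>)" for \<nu>
    unfolding H_infty_def G_def r_def a_def b_def A_def B_def S_def ..
  have Gint: "(\<lambda>s. r s * exp (- b s) * exp (\<nu>\<^sup>2 * a s)) integrable_on S" for \<nu>
    unfolding S_def by (rule integrable_continuous_interval) (intro continuous_intros cr ca cb[unfolded S_def], auto simp: S_def cr[unfolded S_def] ca[unfolded S_def] cb[unfolded S_def])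
  have Gint2: "(\<lambda>s. r s * exp (c * a s - b s + d * \<sigma> s)) integrable_on S" for c d
    unfolding S_def by (rule integrable_continuous_interval) (intro continuous_intros, auto simp: S_def cr[unfolded S_def] ca[unfolded S_def] cb[unfolded S_def] c\<sigma>[unfolded S_def])
  have Iint0: "integral S (\<lambda>s. r s * exp (- b s) * exp (\<nu>\<^sup>2 * a s)) \<ge> 0" for \<nu>
    by (rule integral_nonneg[OF Gint]) (simp add: r0)
  have GgeE: "G \<nu> \<ge> exp (\<nu>\<^sup>2 * A - B)" for \<nu> unfolding G_def using Iint0[of \<nu>] by simp
  have Gpos: "G \<nu> > 0" for \<nu> using GgeE[of \<nu>] exp_gt_zero[of "\<nu>\<^sup>2 * A - B"] by linarith
  have Gmono: "G 0 \<le> G \<nu>" for \<nu>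
  proof -
    have "exp (0\<^sup>2 * A - B) \<le> exp (\<nu>\<^sup>2 * A - B)" using Apos by simp
    moreover have "integral S (\<lambda>s. r s * exp (- b s) * exp (0\<^sup>2 * a s)) \<le> integral S (\<lambda>s. r s * exp (- b s) * exp (\<nu>\<^sup>2 * a s))"
    proof (rule integral_le[OF Gint Gint])
      fix s assume "s \<in> S"
      have "exp (0\<^sup>2 * a s) \<le> exp (\<nu>\<^sup>2 * a s)" using a0[of s] by simp
      then show "r s * exp (- b s) * exp (0\<^sup>2 * a s) \<le> r s * exp (- b s) * exp (\<nu>\<^sup>2 * a s)"
        using r0[OF \<open>s \<in> S\<close>] by (intro mult_left_mono) auto
    qed
    ultimately show ?thesis unfolding G_def by linarith
  qed
  have G0: "G 0 > 1"
  proof -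
    define E where "E = exp (- B)"
    define I where "I = integral S (\<lambda>s. r s / kbarM dM s (g s))"
    have L: "Lnum T t\<alpha> t\<beta> dM dI \<tau> p (h' 0) = E / (1 - E) * I"
      unfolding Lnum_def E_def I_def B_def S_def g_def r_def by (simp add: kbarM_def)
    have I0: "I \<ge> 0"
    proof (cases "(\<lambda>s. r s / kbarM dM s (g s)) integrable_on S")
      case True
      then show ?thesis unfolding I_def by (rule integral_nonneg) (simp add: r0 kbarM_def)
    next
      case False
      then show ?thesis unfolding I_def by (simp add: not_integrable_integral)
    qed
    have E0: "E > 0" unfolding E_def by simp
    have E1: "E < 1"
    proof (rule ccontr)
      assume "\<not> E < 1"
      then have "E / (1 - E) \<le> 0" using E0 by (cases "E = 1") (auto simp: divide_nonneg_neg)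
      then have "E / (1 - E) * I \<le> 0" using I0 by (metis mult_nonpos_nonneg)
      then show False using L L_gt1 by linarith
    qed
    have EI: "E * I > 1 - E"
    proof -
      have "E / (1 - E) * I > 1" using L L_gt1 by simp
      then have "E * I / (1 - E) > 1" by simp
      then show ?thesis using E1 by (simp add: field_simps)
    qed
    have "integral S (\<lambda>s. r s * exp (- b s) * exp (0\<^sup>2 * a s)) = integral S (\<lambda>s. E * (r s / kbarM dM s (g s)))"
    proof (rule integral_cong)
      fix s assume s: "s \<in> S"
      have "integral {0..g s} dM + integral {g s..s} dM = integral {0..s} dM"
        using int_split[OF cdM, of 0 "g s" s] gS[OF s] by simp
      moreover have "integral {0..s} dM + integral {s..T} dM = B"
        using int_split[OF cdM, of 0 s T] gS[OF s] unfolding B_def by simp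
      ultimately have "- b s = - B + integral {g s..s} dM" unfolding b_def g_def by simp
      then have "exp (- b s) = E * exp (integral {g s..s} dM)" unfolding E_def by (simp add: exp_add[symmetric])
      then show "r s * exp (- b s) * exp (0\<^sup>2 * a s) = E * (r s / kbarM dM s (g s))"
        by (simp add: kbarM_def exp_minus field_simps)
    qed
    also have "\<dots> = E * I" unfolding I_def by (rule integral_mult_right)
    finally have "G 0 = E + E * I" unfolding G_def E_def by simp
    then show ?thesis using EI by linarith
  qed
  have Hfun: "H_infty T t\<alpha> t\<beta> D dM dI \<tau> p (h' 0) = (\<lambda>\<nu>. (1 / \<nu>) * ln (G \<nu>))"
    by (rule ext) (rule Hdef)
  obtain c0 where c0: "c0 > 0" "\<And>\<nu>. \<nu> > 0 \<Longrightarrow> (1 / \<nu>) * ln (G \<nu>) \<ge> c0"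
  proof -
    define l0 where "l0 = ln (G 0)"
    have l0: "l0 > 0" unfolding l0_def using G0 by simp
    define \<nu>1 where "\<nu>1 = sqrt (2 * (\<bar>B\<bar> + 1) / A)"
    have \<nu>1: "\<nu>1 > 0" unfolding \<nu>1_def using Apos by simp
    have \<nu>1sq: "\<nu>1\<^sup>2 * A = 2 * (\<bar>B\<bar> + 1)" unfolding \<nu>1_def using Apos by simp
    have "(1 / \<nu>) * ln (G \<nu>) \<ge> min (\<nu>1 * A / 2) (l0 / \<nu>1)" if \<nu>: "\<nu> > 0" for \<nu>
    proof (cases "\<nu> \<le> \<nu>1")
      case True
      have "l0 \<le> ln (G \<nu>)" unfolding l0_def using Gmono[of \<nu>] Gpos by simp
      then have "l0 / \<nu>1 \<le> ln (G \<nu>) / \<nu>"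
        using l0 True \<nu> by (meson frac_le less_imp_le order.trans)
      then show ?thesis by simp
    next
      case False
      have "\<nu>1\<^sup>2 \<le> \<nu>\<^sup>2" using False \<nu>1 by (simp add: power_mono)
      then have "\<nu>1\<^sup>2 * A \<le> \<nu>\<^sup>2 * A" using Apos by simp
      then have "\<nu>\<^sup>2 * A - B \<ge> \<nu>\<^sup>2 * A / 2" using \<nu>1sq abs_ge_self[of B] by argo
      moreover have "ln (G \<nu>) \<ge> \<nu>\<^sup>2 * A - B"
        using GgeE[of \<nu>] Gpos[of \<nu>] by (metis exp_gt_zero ln_exp ln_le_cancel_iff)
      ultimately have "ln (G \<nu>) \<ge> \<nu>\<^sup>2 * A / 2" by linarith
      then have "ln (G \<nu>) / \<nu> \<ge> \<nu> * A / 2" using \<nu> by (simp add: field_simps power2_eq_square)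
      moreover have "\<nu> * A / 2 \<ge> \<nu>1 * A / 2" using False Apos by simp
      moreover have "(1 / \<nu>) * ln (G \<nu>) = ln (G \<nu>) / \<nu>" by simp
      ultimately show ?thesis using min.cobounded1[of "\<nu>1 * A / 2" "l0 / \<nu>1"] by linarith
    qed
    moreover have "min (\<nu>1 * A / 2) (l0 / \<nu>1) > 0" using \<nu>1 Apos l0 by simp
    ultimately show ?thesis using that by blast
  qed
  have Sm0: "Sm \<ge> 0" using Sm Sne \<sigma>0 by (meson ex_in_conv order.trans)
  have Kid: "kernel_mgf T t\<alpha> t\<beta> (\<lambda>t. k * D t) dM DI dI \<tau> p (h' 0) \<mu> =
     exp ((\<mu>\<^sup>2 * k) * A - B) + integral S (\<lambda>s. r s * exp ((\<mu>\<^sup>2 * k) * a s - b s + \<mu>\<^sup>2 * \<sigma> s))" for k \<mu>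
  proof -
    have e: "integral {x..y} (\<lambda>\<zeta>. \<mu>\<^sup>2 * (k * D \<zeta>) - dM \<zeta>) = (\<mu>\<^sup>2 * k) * integral {x..y} D - integral {x..y} dM" for x y
      using int_lin[OF cD cdM, of x y "\<mu>\<^sup>2 * k"] by (simp add: mult.assoc)
    show ?thesis unfolding kernel_mgf_def e A_def B_def r_def a_def b_def \<sigma>_def S_def
      by (simp add: algebra_simps)
  qed
  have bounds: "sqrt k * ((1 / (\<mu> * sqrt k)) * ln (G (\<mu> * sqrt k)))
        \<le> (1 / \<mu>) * ln (kernel_mgf T t\<alpha> t\<beta> (\<lambda>t. k * D t) dM DI dI \<tau> p (h' 0) \<mu>)
     \<and> (1 / \<mu>) * ln (kernel_mgf T t\<alpha> t\<beta> (\<lambda>t. k * D t) dM DI dI \<tau> p (h' 0) \<mu>)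
        \<le> sqrt k * ((1 / (\<mu> * sqrt k)) * ln (G (\<mu> * sqrt k))) + \<mu> * Sm"
    if k: "k > 0" and \<mu>: "\<mu> > 0" for k \<mu>
  proof -
    define \<nu> where "\<nu> = \<mu> * sqrt k"
    have \<nu>sq: "\<nu>\<^sup>2 = \<mu>\<^sup>2 * k" unfolding \<nu>_def using k by (simp add: power_mult_distrib)
    define K where "K = kernel_mgf T t\<alpha> t\<beta> (\<lambda>t. k * D t) dM DI dI \<tau> p (h' 0) \<mu>"
    have K: "K = exp (\<nu>\<^sup>2 * A - B) + integral S (\<lambda>s. r s * exp (\<nu>\<^sup>2 * a s - b s + \<mu>\<^sup>2 * \<sigma> s))"
      unfolding K_def Kid \<nu>sq ..
    have f2: "r s * exp (\<nu>\<^sup>2 * a s - b s + \<mu>\<^sup>2 * \<sigma> s) = (r s * exp (- b s) * exp (\<nu>\<^sup>2 * a s)) * exp (\<mu>\<^sup>2 * \<sigma> s)" for s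
      by (simp add: exp_add[symmetric] exp_diff exp_minus field_simps)
    have I1: "integral S (\<lambda>s. r s * exp (- b s) * exp (\<nu>\<^sup>2 * a s)) \<le> integral S (\<lambda>s. r s * exp (\<nu>\<^sup>2 * a s - b s + \<mu>\<^sup>2 * \<sigma> s))"
    proof (rule integral_le[OF Gint Gint2])
      fix s assume s: "s \<in> S"
      have "0 \<le> r s * exp (- b s) * exp (\<nu>\<^sup>2 * a s)" using r0[OF s] by simp
      moreover have "1 \<le> exp (\<mu>\<^sup>2 * \<sigma> s)" using \<sigma>0[of s] by simp
      ultimately show "r s * exp (- b s) * exp (\<nu>\<^sup>2 * a s) \<le> r s * exp (\<nu>\<^sup>2 * a s - b s + \<mu>\<^sup>2 * \<sigma> s)"
        unfolding f2 by (metis mult.right_neutral mult_left_mono)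
    qed
    have I2: "integral S (\<lambda>s. r s * exp (\<nu>\<^sup>2 * a s - b s + \<mu>\<^sup>2 * \<sigma> s)) \<le> integral S (\<lambda>s. exp (\<mu>\<^sup>2 * Sm) * (r s * exp (- b s) * exp (\<nu>\<^sup>2 * a s)))"
    proof (rule integral_le[OF Gint2])
      show "(\<lambda>s. exp (\<mu>\<^sup>2 * Sm) * (r s * exp (- b s) * exp (\<nu>\<^sup>2 * a s))) integrable_on S"
        by (rule integrable_on_cmult_left[OF Gint, simplified])
      fix s assume s: "s \<in> S"
      have "0 \<le> r s * exp (- b s) * exp (\<nu>\<^sup>2 * a s)" using r0[OF s] by simp
      moreover have "exp (\<mu>\<^sup>2 * \<sigma> s) \<le> exp (\<mu>\<^sup>2 * Sm)" using Sm s by (simp add: mult_left_mono)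
      ultimately show "r s * exp (\<nu>\<^sup>2 * a s - b s + \<mu>\<^sup>2 * \<sigma> s) \<le> exp (\<mu>\<^sup>2 * Sm) * (r s * exp (- b s) * exp (\<nu>\<^sup>2 * a s))"
        unfolding f2 by (metis mult.commute mult_left_mono)
    qed
    have e1: "1 \<le> exp (\<mu>\<^sup>2 * Sm)" using Sm0 by simp
    have KG1: "G \<nu> \<le> K" unfolding K G_def using I1 by simp
    have KG2: "K \<le> exp (\<mu>\<^sup>2 * Sm) * G \<nu>"
    proof -
      have "exp (\<nu>\<^sup>2 * A - B) \<le> exp (\<mu>\<^sup>2 * Sm) * exp (\<nu>\<^sup>2 * A - B)" using e1 by simp
      moreover have "integral S (\<lambda>s. exp (\<mu>\<^sup>2 * Sm) * (r s * exp (- b s) * exp (\<nu>\<^sup>2 * a s)))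
          = exp (\<mu>\<^sup>2 * Sm) * integral S (\<lambda>s. r s * exp (- b s) * exp (\<nu>\<^sup>2 * a s))"
        by (rule integral_mult_right)
      ultimately show ?thesis unfolding K G_def distrib_left using I2 by linarith
    qed
    have Kpos: "K > 0" using KG1 Gpos[of \<nu>] by linarith
    have L1: "ln (G \<nu>) \<le> ln K" using KG1 Gpos[of \<nu>] by simp
    have L2: "ln K \<le> \<mu>\<^sup>2 * Sm + ln (G \<nu>)"
    proof -
      have "ln K \<le> ln (exp (\<mu>\<^sup>2 * Sm) * G \<nu>)" using KG2 Kpos by simp
      also have "\<dots> = \<mu>\<^sup>2 * Sm + ln (G \<nu>)" using Gpos[of \<nu>] by (simp add: ln_mult)
      finally show ?thesis .
    qed
    have sq: "sqrt k * (1 / (\<mu> * sqrt k)) = 1 / \<mu>" using k \<mu> by simp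
    have "(1 / \<mu>) * ln (G \<nu>) \<le> (1 / \<mu>) * ln K" using L1 \<mu> by (simp add: divide_right_mono)
    moreover have "(1 / \<mu>) * ln K \<le> (1 / \<mu>) * ln (G \<nu>) + \<mu> * Sm"
    proof -
      have "(1 / \<mu>) * ln K \<le> (1 / \<mu>) * (\<mu>\<^sup>2 * Sm + ln (G \<nu>))" using L2 \<mu> by (simp add: divide_right_mono)
      also have "\<dots> = (1 / \<mu>) * ln (G \<nu>) + \<mu> * Sm" using \<mu> by (simp add: field_simps power2_eq_square)
      finally show ?thesis .
    qed
    moreover have sq2: "sqrt k * ((1 / (\<mu> * sqrt k)) * x) = (1 / \<mu>) * x" for x
      using sq by (metis mult.assoc)
    ultimately show ?thesis unfolding sq2 unfolding K_def \<nu>_def by simp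
  qed
  define Hg where "Hg = (\<lambda>\<nu>. (1 / \<nu>) * ln (G \<nu>))"
  have Hc0: "Hg \<nu> \<ge> c0" if "\<nu> > 0" for \<nu> unfolding Hg_def using c0(2)[OF that] .
  have bdd: "bdd_below (Hg ` {0<..})" using Hc0 by (intro bdd_belowI[where m=c0]) auto
  define m where "m = (INF \<nu>\<in>{0<..}. Hg \<nu>)"
  have mc0: "m \<ge> c0" unfolding m_def by (rule cINF_greatest) (auto simp: Hc0)
  have Hm: "Hg \<nu> \<ge> m" if "\<nu> > 0" for \<nu> unfolding m_def by (rule cINF_lower[OF bdd]) (use that in simp)
  have lim: "((\<lambda>k. spreading_speed T t\<alpha> t\<beta> (\<lambda>t. k * D t) dM DI dI \<tau> p (h' 0) / sqrt k) \<longlongrightarrow> m) at_top"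
  proof (rule tendstoI)
    fix \<epsilon> :: real assume \<epsilon>: "\<epsilon> > 0"
    have "m < m + \<epsilon> / 2" using \<epsilon> by simp
    then obtain \<nu>0 where \<nu>0: "\<nu>0 > 0" "Hg \<nu>0 < m + \<epsilon> / 2"
      using cINF_less_iff[of "{0<..}" Hg "m + \<epsilon> / 2"] bdd unfolding m_def by auto
    show "eventually (\<lambda>k. dist (spreading_speed T t\<alpha> t\<beta> (\<lambda>t. k * D t) dM DI dI \<tau> p (h' 0) / sqrt k) m < \<epsilon>) at_top"
      using eventually_gt_at_top[of "max 0 (2 * \<nu>0 * Sm / \<epsilon>)"]
    proof eventually_elim
      case (elim k)
      have k: "k > 0" using elim by simp
      have sk: "sqrt k > 0" using k by simp
      define \<Phi> where "\<Phi> = (\<lambda>\<mu>. (1 / \<mu>) * ln (kernel_mgf T t\<alpha> t\<beta> (\<lambda>t. k * D t) dM DI dI \<tau> p (h' 0) \<mu>))"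
      have cs: "spreading_speed T t\<alpha> t\<beta> (\<lambda>t. k * D t) dM DI dI \<tau> p (h' 0) = (INF \<mu>\<in>{0<..}. \<Phi> \<mu>)"
        unfolding spreading_speed_def \<Phi>_def ..
      have low: "\<Phi> \<mu> \<ge> sqrt k * m" if \<mu>: "\<mu> > 0" for \<mu>
      proof -
        have "sqrt k * m \<le> sqrt k * Hg (\<mu> * sqrt k)" using Hm[of "\<mu> * sqrt k"] \<mu> sk by simp
        then show ?thesis using bounds[OF k \<mu>] unfolding \<Phi>_def Hg_def by linarith
      qed
      have bdd\<Phi>: "bdd_below (\<Phi> ` {0<..})" using low by (intro bdd_belowI[where m="sqrt k * m"]) auto
      have c1: "(INF \<mu>\<in>{0<..}. \<Phi> \<mu>) \<ge> sqrt k * m" by (rule cINF_greatest) (auto simp: low)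
      have \<mu>0: "\<nu>0 / sqrt k > 0" using \<nu>0 sk by simp
      have c2: "(INF \<mu>\<in>{0<..}. \<Phi> \<mu>) \<le> \<Phi> (\<nu>0 / sqrt k)" by (rule cINF_lower[OF bdd\<Phi>]) (use \<mu>0 in simp)
      have e: "\<nu>0 / sqrt k * sqrt k = \<nu>0" using sk by simp
      have c3: "\<Phi> (\<nu>0 / sqrt k) \<le> sqrt k * Hg \<nu>0 + \<nu>0 / sqrt k * Sm"
        using bounds[OF k \<mu>0] unfolding \<Phi>_def Hg_def e by linarith
      define c where "c = (INF \<mu>\<in>{0<..}. \<Phi> \<mu>)"
      have lo: "c / sqrt k \<ge> m" using c1 sk unfolding c_def by (simp add: field_simps)
      have "c / sqrt k \<le> (sqrt k * Hg \<nu>0 + \<nu>0 / sqrt k * Sm) / sqrt k"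
        using c2 c3 sk unfolding c_def by (simp add: divide_right_mono)
      also have "\<dots> = Hg \<nu>0 + \<nu>0 * Sm / k" using sk k by (simp add: field_simps)
      finally have hi: "c / sqrt k \<le> Hg \<nu>0 + \<nu>0 * Sm / k" .
      have "2 * \<nu>0 * Sm / \<epsilon> < k" using elim by simp
      then have "2 * \<nu>0 * Sm < k * \<epsilon>" using \<epsilon> by (simp add: field_simps)
      then have "\<nu>0 * Sm / k < \<epsilon> / 2" using k by (simp add: field_simps)
      then have "\<bar>c / sqrt k - m\<bar> < \<epsilon>" using lo hi \<nu>0 by linarith
      then show ?case unfolding cs c_def[symmetric] dist_real_def .
    qed
  qed
  show ?thesis unfolding Hfun Hg_def[symmetric] m_def[symmetric] using lim bdd mc0 c0 by auto
qed

end
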